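(* In the DGL-test-based classification setting described in the context, with $M\ge2$, $n,N\ge1$, $\alpha=N/n$ and $D=\min_{i\neq j}V(P_i,P_j)$, the classification error probability satisfies, for every prior $(\pi_1,\dots,\pi_M)$, $$\Pr[e_{\mathrm{CL}}]\le 2M\exp\!\Big(-n\Big(\frac{\alpha D^2}{2(2+\sqrt\alpha)^2}-\max\Big\{\frac{2\ln(M-1)}{n},\frac{|\mathcal X|\ln 2}{n}\Big\}\Big)\Big).$$
   Context: Setting: $\mathcal X$ is a finite alphabet and $P_1,\dots,P_M$ are (unknown) distributions on $\mathcal X$. For distributions $P,Q$ on $\mathcal X$, $V(P,Q)=\max_{F\subseteq\mathcal X}|P(F)-Q(F)|=\frac12\sum_{a}|P(a)-Q(a)|$. Training sequences $\vec t_i^{\,N}=(t_{i1},\dots,t_{iN})$, $i=1,\dots,M$, are mutually independent, with $\vec t_i^{\,N}$ i.i.d. from $P_i$; $T_i(a)=\frac1N\#\{k:t_{ik}=a\}$ is its empirical distribution, and $T_i(A)=\sum_{a\in A}T_i(a)$. Under hypothesis $\mathcal H_i$, the test sequence $\vec x^{\,n}=(x_1,\dots,x_n)$ is i.i.d. from $P_i$ and independent of the training sequences. Classifier (DGL test with nominal distributions $T_i$): let $\mathcal A=\{A_{k,l}:1\le k<l\le M\}$ with $A_{k,l}=\{a\in\mathcal X: T_k(a)\ge T_l(a)\}$, let $\mu_n(A)=\frac1n\#\{m: x_m\in A\}$, define the score $s_j=\max_{A\in\mathcal A}|T_j(A)-\mu_n(A)|$, and output any index $\hat\imath$ minimizing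 $s_j$ over $j$ (ties broken arbitrarily). Given a prior $\pi_i>0$, $\sum_i\pi_i=1$, the classification error probability is $\Pr[e_{\mathrm{CL}}]=\sum_{i=1}^M\pi_i\Pr[\hat\imath\neq i\mid\mathcal H_i]$, the probability taken over both the test and training sequences. *)

theory Defs
  imports "HOL-Probability.Probability"
begin

text \<open>Indices are 0-based: hypotheses/classes are 0..M-1, positions in sequences
 are 0..N-1 resp. 0..n-1. The alphabet is a finite type 'a.\<close>

definition var_dist :: "'a::finite pmf \<Rightarrow> 'a pmf \<Rightarrow> real" where
  "var_dist P Q = (1/2) * (\<Sum>a\<in>UNIV. \<bar>pmf P a - pmf Q a\<bar>)"

definition emp :: "nat \<Rightarrow> (nat \<Rightarrow> 'a) \<Rightarrow> 'a \<Rightarrow> real" where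
  "emp L s a = real (card {k. k < L \<and> s k = a}) / real L"

definition emp_set :: "nat \<Rightarrow> (nat \<Rightarrow> 'a) \<Rightarrow> 'a set \<Rightarrow> real" where
  "emp_set L s A = real (card {k. k < L \<and> s k \<in> A}) / real L"

text \<open>Training data t: t i is the i-th training sequence (length N).\<close>
definition Aset :: "nat \<Rightarrow> (nat \<Rightarrow> nat \<Rightarrow> 'a) \<Rightarrow> nat \<Rightarrow> nat \<Rightarrow> 'a set" where
  "Aset N t k l = {a. emp N (t k) a \<ge> emp N (t l) a}"

definition Acal :: "nat \<Rightarrow> nat \<Rightarrow> (nat \<Rightarrow> nat \<Rightarrow> 'a) \<Rightarrow> 'a set set" where
  "Acal M N t = {Aset N t k l | k l. k < l \<and> l < M}"

text \<open>Score s_j of class j given training data t and test sequence x of length n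
 (T_j(A) = emp_set N (t j) A, mu_n(A) = emp_set n x A).\<close>
definition score :: "nat \<Rightarrow> nat \<Rightarrow> nat \<Rightarrow> (nat \<Rightarrow> nat \<Rightarrow> 'a) \<Rightarrow> (nat \<Rightarrow> 'a) \<Rightarrow> nat \<Rightarrow> real" where
  "score M N n t x j = Max ((\<lambda>A. \<bar>emp_set N (t j) A - emp_set n x A\<bar>) ` Acal M N t)"

text \<open>A DGL classifier: any decision rule outputting a minimiser of the scores
 (ties broken arbitrarily).\<close>
definition DGL_classifier :: "nat \<Rightarrow> nat \<Rightarrow> nat \<Rightarrow> ((nat \<Rightarrow> nat \<Rightarrow> 'a) \<Rightarrow> (nat \<Rightarrow> 'a) \<Rightarrow> nat) \<Rightarrow> bool" where
  "DGL_classifier M N n dec \<longleftrightarrow>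
     (\<forall>t x. dec t x < M \<and> (\<forall>j<M. score M N n t x (dec t x) \<le> score M N n t x j))"

definition joint_law :: "nat \<Rightarrow> nat \<Rightarrow> nat \<Rightarrow> (nat \<Rightarrow> 'a pmf) \<Rightarrow> nat \<Rightarrow> ((nat \<Rightarrow> nat \<Rightarrow> 'a) \<times> (nat \<Rightarrow> 'a)) pmf" where
  "joint_law M N n P i =
     pair_pmf (Pi_pmf {..<M} undefined (\<lambda>j. Pi_pmf {..<N} undefined (\<lambda>_. P j)))
              (Pi_pmf {..<n} undefined (\<lambda>_. P i))"

definition class_error :: "nat \<Rightarrow> nat \<Rightarrow> nat \<Rightarrow> (nat \<Rightarrow> 'a pmf) \<Rightarrow> (nat \<Rightarrow> real)
    \<Rightarrow> ((nat \<Rightarrow> nat \<Rightarrow> 'a) \<Rightarrow> (nat \<Rightarrow> 'a) \<Rightarrow> nat) \<Rightarrow> real" where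
  "class_error M N n P \<pi> dec =
     (\<Sum>i<M. \<pi> i * measure_pmf.prob (joint_law M N n P i) {(t, x). dec t x \<noteq> i})"

end

theory Submission
  imports Defs
begin


lemma emp_set_sum:
  fixes s :: "nat \<Rightarrow> 'a::finite"
  shows "emp_set L s F = (\<Sum>a\<in>F. emp L s a)"
proof -
  have "card {k. k < L \<and> s k \<in> F} = (\<Sum>a\<in>F. card {k. k < L \<and> s k = a})"
  proof -
    have "{k. k < L \<and> s k \<in> F} = (\<Union>a\<in>F. {k. k < L \<and> s k = a})" by auto
    moreover have "card (\<Union>a\<in>F. {k. k < L \<and> s k = a}) = (\<Sum>a\<in>F. card {k. k < L \<and> s k = a})"
      by (rule card_UN_disjoint) auto
    ultimately show ?thesis by simp
  qed
  then show ?thesis unfolding emp_set_def emp_def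
    by (simp add: sum_divide_distrib)
qed

lemma emp_set_UNIV: "L > 0 \<Longrightarrow> emp_set L s UNIV = 1"
  unfolding emp_set_def by simp

lemma emp_set_compl:
  fixes s :: "nat \<Rightarrow> 'a::finite"
  assumes "L > 0" shows "emp_set L s (-F) = 1 - emp_set L s F"
proof -
  have "emp_set L s UNIV = emp_set L s F + emp_set L s (-F)"
    unfolding emp_set_sum by (subst sum.union_disjoint[symmetric]) (auto intro: arg_cong[where f="sum _"])
  then show ?thesis using emp_set_UNIV[OF assms, of s] by linarith
qed

lemma prob_compl:
  fixes P :: "'a pmf"
  shows "measure_pmf.prob P (-F) = 1 - measure_pmf.prob P F"
  using measure_pmf.prob_compl[of F P] by (simp add: Compl_eq_Diff_UNIV)

lemma sum_pos_part:
  fixes f g :: "'a::finite \<Rightarrow> real"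
  shows "(\<Sum>a\<in>B. f a - g a) \<le> (\<Sum>a\<in>{a. g a \<le> f a}. f a - g a)"
proof -
  let ?S = "{a. g a \<le> f a}"
  have "(\<Sum>a\<in>B. f a - g a) = (\<Sum>a\<in>B \<inter> ?S. f a - g a) + (\<Sum>a\<in>B - ?S. f a - g a)"
    by (rule sum.Int_Diff) simp
  also have "(\<Sum>a\<in>B - ?S. f a - g a) \<le> 0" by (intro sum_nonpos) auto
  also have "(\<Sum>a\<in>B \<inter> ?S. f a - g a) \<le> (\<Sum>a\<in>?S. f a - g a)"
    by (intro sum_mono2) auto
  finally show ?thesis by simp
qed

lemma var_dist_alt:
  fixes P Q :: "'a::finite pmf"
  shows "var_dist P Q = measure_pmf.prob P {a. pmf Q a \<le> pmf P a} - measure_pmf.prob Q {a. pmf Q a \<le> pmf P a}"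
proof -
  let ?S = "{a. pmf Q a \<le> pmf P a}"
  have s1: "sum (pmf P) UNIV = 1" "sum (pmf Q) UNIV = 1" by (auto intro: sum_pmf_eq_1)
  have z: "(\<Sum>a\<in>UNIV. pmf P a - pmf Q a) = 0" using s1 by (simp add: sum_subtractf)
  have sp: "(\<Sum>a\<in>UNIV. pmf P a - pmf Q a) = (\<Sum>a\<in>?S. pmf P a - pmf Q a) + (\<Sum>a\<in>-?S. pmf P a - pmf Q a)"
    by (subst sum.union_disjoint[symmetric]) (auto intro: arg_cong[where f="sum _"])
  have sa: "(\<Sum>a\<in>UNIV. \<bar>pmf P a - pmf Q a\<bar>) = (\<Sum>a\<in>?S. \<bar>pmf P a - pmf Q a\<bar>) + (\<Sum>a\<in>-?S. \<bar>pmf P a - pmf Q a\<bar>)"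
    by (subst sum.union_disjoint[symmetric]) (auto intro: arg_cong[where f="sum _"])
  have a1: "(\<Sum>a\<in>?S. \<bar>pmf P a - pmf Q a\<bar>) = (\<Sum>a\<in>?S. pmf P a - pmf Q a)"
    by (intro sum.cong) auto
  have a2: "(\<Sum>a\<in>-?S. \<bar>pmf P a - pmf Q a\<bar>) = - (\<Sum>a\<in>-?S. pmf P a - pmf Q a)"
    by (subst sum_negf[symmetric], intro sum.cong) auto
  have "var_dist P Q = (\<Sum>a\<in>?S. pmf P a - pmf Q a)"
    unfolding var_dist_def using z sp sa a1 a2 by simp
  also have "\<dots> = measure_pmf.prob P ?S - measure_pmf.prob Q ?S"
    by (simp add: measure_measure_pmf_finite sum_subtractf)
  finally show ?thesis .
qed


lemma Acal_finite: "finite (Acal M N (t :: nat \<Rightarrow> nat \<Rightarrow> 'a::finite))"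
  by (rule finite_subset[of _ UNIV]) auto

lemma score_ge:
  fixes t :: "nat \<Rightarrow> nat \<Rightarrow> 'a::finite"
  assumes "A \<in> Acal M N t"
  shows "\<bar>emp_set N (t k) A - emp_set n x A\<bar> \<le> score M N n t x k"
  unfolding score_def using assms Acal_finite by (intro Max_ge) auto

lemma score_attained:
  fixes t :: "nat \<Rightarrow> nat \<Rightarrow> 'a::finite"
  assumes "M \<ge> 2"
  shows "\<exists>A\<in>Acal M N t. score M N n t x k = \<bar>emp_set N (t k) A - emp_set n x A\<bar>"
proof -
  have "Aset N t 0 1 \<in> Acal M N t" unfolding Acal_def using assms by (intro CollectI exI[of _ 0] exI[of _ 1]) auto
  then have ne: "Acal M N t \<noteq> {}" by auto
  have "score M N n t x k \<in> (\<lambda>A. \<bar>emp_set N (t k) A - emp_set n x A\<bar>) ` Acal M N t"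
    unfolding score_def using ne Acal_finite by (intro Max_in) auto
  then show ?thesis by auto
qed

lemma det:
  fixes t :: "nat \<Rightarrow> nat \<Rightarrow> 'a::finite" and P :: "nat \<Rightarrow> 'a pmf"
  assumes M: "M \<ge> 2" and N: "N > 0" and ij: "i < M" "j < M" "i \<noteq> j"
    and sc: "score M N n t x j \<le> score M N n t x i"
    and bi: "\<forall>F. \<bar>emp_set N (t i) F - measure_pmf.prob (P i) F\<bar> < a"
    and bj: "\<forall>F. \<bar>emp_set N (t j) F - measure_pmf.prob (P j) F\<bar> < a"
    and bx: "\<forall>F. \<bar>emp_set n x F - measure_pmf.prob (P i) F\<bar> < c"
  shows "var_dist (P i) (P j) < 4*a + 2*c"
proof -
  let ?Ti = "emp_set N (t i)" and ?Tj = "emp_set N (t j)" and ?mu = "emp_set n x"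
  obtain As where As: "As \<in> Acal M N t" "score M N n t x i = \<bar>?Ti As - ?mu As\<bar>"
    using score_attained[OF M] by blast
  have si: "score M N n t x i < a + c"
    using As(2) bi bx[rule_format, of As] bi[rule_format, of As] by linarith
  define B where "B = {b. pmf (P j) b \<le> pmf (P i) b}"
  have "\<exists>A\<in>Acal M N t. ?Ti B - ?Tj B \<le> \<bar>?Ti A - ?Tj A\<bar>"
  proof (cases "i < j")
    case True
    let ?A = "Aset N t i j"
    have A: "?A \<in> Acal M N t" unfolding Acal_def using True ij by auto
    have "?Ti B - ?Tj B = (\<Sum>b\<in>B. emp N (t i) b - emp N (t j) b)"
      by (simp add: emp_set_sum sum_subtractf)
    also have "\<dots> \<le> (\<Sum>b\<in>?A. emp N (t i) b - emp N (t j) b)"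
      unfolding Aset_def by (rule sum_pos_part)
    also have "\<dots> = ?Ti ?A - ?Tj ?A" by (simp add: emp_set_sum sum_subtractf)
    finally show ?thesis using A by force
  next
    case False
    then have ji: "j < i" using ij by auto
    let ?A = "Aset N t j i"
    have A: "?A \<in> Acal M N t" unfolding Acal_def using ji ij by auto
    have "?Ti B - ?Tj B = ?Tj (-B) - ?Ti (-B)" using emp_set_compl[OF N, of "t i" B] emp_set_compl[OF N, of "t j" B] by simp
    also have "\<dots> = (\<Sum>b\<in>-B. emp N (t j) b - emp N (t i) b)"
      by (simp add: emp_set_sum sum_subtractf)
    also have "\<dots> \<le> (\<Sum>b\<in>?A. emp N (t j) b - emp N (t i) b)"
      unfolding Aset_def by (rule sum_pos_part)
    also have "\<dots> = ?Tj ?A - ?Ti ?A" by (simp add: emp_set_sum sum_subtractf)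
    finally show ?thesis using A by force
  qed
  then obtain A where A: "A \<in> Acal M N t" "?Ti B - ?Tj B \<le> \<bar>?Ti A - ?Tj A\<bar>" by blast
  have "\<bar>?Ti A - ?Tj A\<bar> \<le> score M N n t x i + score M N n t x j"
    using score_ge[OF A(1), of i n x] score_ge[OF A(1), of j n x] by linarith
  have "var_dist (P i) (P j) = measure_pmf.prob (P i) B - measure_pmf.prob (P j) B"
    unfolding B_def by (rule var_dist_alt)
  moreover have "\<bar>?Ti B - measure_pmf.prob (P i) B\<bar> < a" "\<bar>?Tj B - measure_pmf.prob (P j) B\<bar> < a"
    using bi bj by auto
  moreover note \<open>\<bar>?Ti A - ?Tj A\<bar> \<le> _\<close> si sc A(2)
  ultimately show ?thesis by linarith
qed


lemma map_indicator_bernoulli: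
  fixes P :: "'a pmf"
  shows "map_pmf (\<lambda>a. a \<in> F) P = bernoulli_pmf (measure_pmf.prob P F)"
proof (rule pmf_eqI)
  fix b :: bool
  have p: "0 \<le> measure_pmf.prob P F" "measure_pmf.prob P F \<le> 1" by auto
  show "pmf (map_pmf (\<lambda>a. a \<in> F) P) b = pmf (bernoulli_pmf (measure_pmf.prob P F)) b"
  proof (cases b)
    case True
    then show ?thesis using p by (simp add: pmf_map vimage_def)
  next
    case False
    have "(\<lambda>a. a \<in> F) -` {False} = -F" by auto
    then show ?thesis using p False by (simp add: pmf_map prob_compl)
  qed
qed

lemma hoeff_one:
  fixes P :: "'a pmf" and d :: 'a
  assumes L: "L > 0" and e: "e \<ge> 0"
  shows "measure_pmf.prob (Pi_pmf {..<L} d (\<lambda>_. P))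
           {s. emp_set L s F - measure_pmf.prob P F \<ge> e} \<le> exp (- 2 * real L * e\<^sup>2)"
proof -
  let ?p = "measure_pmf.prob P F"
  let ?g = "\<lambda>a. a \<in> F"
  let ?c = "\<lambda>s. card {k\<in>{..<L}. s k \<in> F}"
  have p: "?p \<in> {0..1}" by auto
  have "binomial_pmf L ?p = map_pmf (\<lambda>f. card {x\<in>{..<L}. f x}) (Pi_pmf {..<L} (?g d) (\<lambda>_. bernoulli_pmf ?p))"
    by (rule binomial_pmf_altdef') (use p in auto)
  also have "Pi_pmf {..<L} (?g d) (\<lambda>_. bernoulli_pmf ?p) = Pi_pmf {..<L} (?g d) (\<lambda>_. map_pmf ?g P)"
    by (simp add: map_indicator_bernoulli)
  also have "\<dots> = map_pmf (\<lambda>h. ?g \<circ> h) (Pi_pmf {..<L} d (\<lambda>_. P))"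
    by (rule Pi_pmf_map) auto
  finally have bin: "binomial_pmf L ?p = map_pmf ?c (Pi_pmf {..<L} d (\<lambda>_. P))"
    by (simp add: pmf.map_comp o_def)
  have "{s. emp_set L s F - ?p \<ge> e} = ?c -` {x. ?p + e \<le> real x / real L}"
    unfolding emp_set_def by auto
  then have "measure_pmf.prob (Pi_pmf {..<L} d (\<lambda>_. P)) {s. emp_set L s F - ?p \<ge> e}
      = measure_pmf.prob (binomial_pmf L ?p) {x. ?p + e \<le> real x / real L}"
    by (simp add: bin)
  also have "\<dots> \<le> exp (real_of_int (- 2 * int L) * e\<^sup>2)"
    by (rule binomial_distribution.prob_ge') (use p L e in \<open>auto simp: binomial_distribution_def\<close>)
  finally show ?thesis by simp
qed

lemma hoeff_all:
  fixes P :: "'a::finite pmf" and d :: 'a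
  assumes L: "L > 0" and e: "e \<ge> 0"
  shows "measure_pmf.prob (Pi_pmf {..<L} d (\<lambda>_. P))
           {s. \<exists>F. emp_set L s F - measure_pmf.prob P F \<ge> e}
         \<le> 2 ^ CARD('a) * exp (- 2 * real L * e\<^sup>2)"
proof -
  let ?Q = "Pi_pmf {..<L} d (\<lambda>_. P)"
  have "{s. \<exists>F. emp_set L s F - measure_pmf.prob P F \<ge> e}
        = (\<Union>F\<in>(UNIV :: 'a set set). {s. emp_set L s F - measure_pmf.prob P F \<ge> e})" by auto
  then have "measure_pmf.prob ?Q {s. \<exists>F. emp_set L s F - measure_pmf.prob P F \<ge> e}
     \<le> (\<Sum>F\<in>(UNIV :: 'a set set). measure_pmf.prob ?Q {s. emp_set L s F - measure_pmf.prob P F \<ge> e})"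
    by (simp add: measure_pmf.finite_measure_subadditive_finite)
  also have "\<dots> \<le> (\<Sum>F\<in>(UNIV :: 'a set set). exp (- 2 * real L * e\<^sup>2))"
    by (intro sum_mono hoeff_one L e)
  also have "\<dots> = 2 ^ CARD('a) * exp (- 2 * real L * e\<^sup>2)"
    by (simp add: card_UNIV_set)
  finally show ?thesis .
qed


lemma var_dist_nonneg: "var_dist P Q \<ge> 0"
  unfolding var_dist_def by (simp add: sum_nonneg)

lemma joint_fst:
  assumes "k < M"
  shows "map_pmf (\<lambda>p. fst p k) (joint_law M N n P i) = Pi_pmf {..<N} undefined (\<lambda>_. P k)"
proof -
  have "map_pmf (\<lambda>p. fst p k) (joint_law M N n P i) = map_pmf (\<lambda>t. t k) (map_pmf fst (joint_law M N n P i))"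
    by (simp add: pmf.map_comp o_def)
  also have "\<dots> = Pi_pmf {..<N} undefined (\<lambda>_. P k)"
    unfolding joint_law_def map_fst_pair_pmf using assms by (subst Pi_pmf_component) auto
  finally show ?thesis .
qed

lemma joint_snd:
  "map_pmf snd (joint_law M N n P i) = Pi_pmf {..<n} undefined (\<lambda>_. P i)"
  unfolding joint_law_def map_snd_pair_pmf ..

lemma abs_bound:
  fixes s :: "nat \<Rightarrow> 'a::finite" and Q :: "'a pmf"
  assumes L: "L > 0" and h: "\<not> (\<exists>F. emp_set L s F - measure_pmf.prob Q F \<ge> e)"
  shows "\<forall>F. \<bar>emp_set L s F - measure_pmf.prob Q F\<bar> < e"
proof
  fix F
  have 1: "emp_set L s F - measure_pmf.prob Q F < e" using h by (meson not_le)
  have 2: "emp_set L s (-F) - measure_pmf.prob Q (-F) < e" using h by (meson not_le)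
  show "\<bar>emp_set L s F - measure_pmf.prob Q F\<bar> < e"
    using 1 2 emp_set_compl[OF L, of s F] prob_compl[of Q F] by linarith
qed

lemma err_i:
  fixes P :: "nat \<Rightarrow> 'a::finite pmf"
  assumes M: "M \<ge> 2" and N: "N > 0" and n: "n > 0" and i: "i < M"
    and dgl: "DGL_classifier M N n dec"
    and D: "\<And>i j. i < M \<Longrightarrow> j < M \<Longrightarrow> i \<noteq> j \<Longrightarrow> D \<le> var_dist (P i) (P j)"
    and a: "a \<ge> 0" and c: "c \<ge> 0" and acD: "4*a + 2*c = D"
  shows "measure_pmf.prob (joint_law M N n P i) {(t, x). dec t x \<noteq> i}
     \<le> real M * (2 ^ CARD('a) * exp (- 2 * real N * a\<^sup>2)) + 2 ^ CARD('a) * exp (- 2 * real n * c\<^sup>2)"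
proof -
  let ?J = "joint_law M N n P i"
  define bad where "bad k = {p :: (nat \<Rightarrow> nat \<Rightarrow> 'a) \<times> (nat \<Rightarrow> 'a). \<exists>F. emp_set N (fst p k) F - measure_pmf.prob (P k) F \<ge> a}" for k
  define badx where "badx = {p :: (nat \<Rightarrow> nat \<Rightarrow> 'a) \<times> (nat \<Rightarrow> 'a). \<exists>F. emp_set n (snd p) F - measure_pmf.prob (P i) F \<ge> c}"
  have sub: "{(t, x). dec t x \<noteq> i} \<subseteq> (\<Union>k\<in>{..<M}. bad k) \<union> badx"
  proof
    fix p assume p: "p \<in> {(t, x). dec t x \<noteq> i}"
    obtain t x where px: "p = (t, x)" by (cases p)
    let ?j = "dec t x"
    have j: "?j < M" "?j \<noteq> i" "score M N n t x ?j \<le> score M N n t x i"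
      using dgl p px i unfolding DGL_classifier_def by auto
    show "p \<in> (\<Union>k\<in>{..<M}. bad k) \<union> badx"
    proof (rule ccontr)
      assume "p \<notin> (\<Union>k\<in>{..<M}. bad k) \<union> badx"
      then have nb: "p \<notin> bad i" "p \<notin> bad ?j" "p \<notin> badx" using i j by auto
      have bi: "\<forall>F. \<bar>emp_set N (t i) F - measure_pmf.prob (P i) F\<bar> < a"
        by (rule abs_bound[OF N]) (use nb(1) px in \<open>auto simp: bad_def\<close>)
      have bj: "\<forall>F. \<bar>emp_set N (t ?j) F - measure_pmf.prob (P ?j) F\<bar> < a"
        by (rule abs_bound[OF N]) (use nb(2) px in \<open>auto simp: bad_def\<close>)
      have bx: "\<forall>F. \<bar>emp_set n x F - measure_pmf.prob (P i) F\<bar> < c"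
        by (rule abs_bound[OF n]) (use nb(3) px in \<open>auto simp: badx_def\<close>)
      have "var_dist (P i) (P ?j) < 4*a + 2*c"
        by (rule det[OF M N i j(1) j(2)[symmetric] j(3) bi bj bx])
      moreover have "D \<le> var_dist (P i) (P ?j)" using D[OF i j(1) j(2)[symmetric]] .
      ultimately show False using acD by linarith
    qed
  qed
  have "measure_pmf.prob ?J {(t, x). dec t x \<noteq> i} \<le> measure_pmf.prob ?J ((\<Union>k\<in>{..<M}. bad k) \<union> badx)"
    by (rule measure_pmf.finite_measure_mono[OF sub]) auto
  also have "\<dots> \<le> measure_pmf.prob ?J (\<Union>k\<in>{..<M}. bad k) + measure_pmf.prob ?J badx"
    by (rule measure_Un_le) auto
  also have "measure_pmf.prob ?J (\<Union>k\<in>{..<M}. bad k) \<le> (\<Sum>k<M. measure_pmf.prob ?J (bad k))"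
    by (rule measure_pmf.finite_measure_subadditive_finite) auto
  also have "\<dots> \<le> (\<Sum>k<M. 2 ^ CARD('a) * exp (- 2 * real N * a\<^sup>2))"
  proof (rule sum_mono)
    fix k assume k: "k \<in> {..<M}"
    have "bad k = (\<lambda>p. fst p k) -` {s. \<exists>F. emp_set N s F - measure_pmf.prob (P k) F \<ge> a}"
      unfolding bad_def by auto
    then have "measure_pmf.prob ?J (bad k) = measure_pmf.prob (map_pmf (\<lambda>p. fst p k) ?J) {s. \<exists>F. emp_set N s F - measure_pmf.prob (P k) F \<ge> a}"
      by simp
    also have "\<dots> = measure_pmf.prob (Pi_pmf {..<N} undefined (\<lambda>_. P k)) {s. \<exists>F. emp_set N s F - measure_pmf.prob (P k) F \<ge> a}"
      using k by (simp add: joint_fst)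
    also have "\<dots> \<le> 2 ^ CARD('a) * exp (- 2 * real N * a\<^sup>2)"
      by (rule hoeff_all[OF N a])
    finally show "measure_pmf.prob ?J (bad k) \<le> 2 ^ CARD('a) * exp (- 2 * real N * a\<^sup>2)" .
  qed
  also have "measure_pmf.prob ?J badx \<le> 2 ^ CARD('a) * exp (- 2 * real n * c\<^sup>2)"
  proof -
    have "badx = snd -` {s. \<exists>F. emp_set n s F - measure_pmf.prob (P i) F \<ge> c}"
      unfolding badx_def by auto
    then have "measure_pmf.prob ?J badx = measure_pmf.prob (map_pmf snd ?J) {s. \<exists>F. emp_set n s F - measure_pmf.prob (P i) F \<ge> c}"
      by simp
    also have "\<dots> \<le> 2 ^ CARD('a) * exp (- 2 * real n * c\<^sup>2)"
      unfolding joint_snd by (rule hoeff_all[OF n c])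
    finally show ?thesis .
  qed
  finally show ?thesis by simp
qed


theorem corollary1:
  fixes P :: "nat \<Rightarrow> 'a::finite pmf" and \<pi> :: "nat \<Rightarrow> real"
    and M N n :: nat
    and dec :: "(nat \<Rightarrow> nat \<Rightarrow> 'a) \<Rightarrow> (nat \<Rightarrow> 'a) \<Rightarrow> nat"
  assumes "M \<ge> 2" and "n \<ge> 1" and "N \<ge> 1"
    and "\<forall>i<M. \<pi> i > 0" and "(\<Sum>i<M. \<pi> i) = 1"
    and "DGL_classifier M N n dec"
  shows "let \<alpha> = real N / real n;
             D = Min {var_dist (P i) (P j) | i j. i < M \<and> j < M \<and> i \<noteq> j}
         in class_error M N n P \<pi> dec
            \<le> 2 * real M * exp (- real n * (\<alpha> * D\<^sup>2 / (2 * (2 + sqrt \<alpha>)\<^sup>2)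
                 - max (2 * ln (real M - 1) / real n) (real CARD('a) * ln 2 / real n)))"
proof -
  note M = assms(1) and dgl = assms(6)
  have n: "n > 0" and N: "N > 0" using assms(2,3) by auto
  define \<alpha> where "\<alpha> = real N / real n"
  define S where "S = {var_dist (P i) (P j) | i j. i < M \<and> j < M \<and> i \<noteq> j}"
  define D where "D = Min S"
  define C where "C = real CARD('a)"
  have Sfin: "finite S"
  proof -
    have "S \<subseteq> (\<lambda>(i, j). var_dist (P i) (P j)) ` ({..<M} \<times> {..<M})" unfolding S_def by auto
    then show ?thesis by (rule finite_subset) auto
  qed
  have Sne: "var_dist (P 0) (P 1) \<in> S" unfolding S_def using M by force
  have D0: "D \<ge> 0" unfolding D_def using Sfin Sne
    by (subst Min_ge_iff) (auto simp: S_def var_dist_nonneg)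
  have Dle: "\<And>i j. i < M \<Longrightarrow> j < M \<Longrightarrow> i \<noteq> j \<Longrightarrow> D \<le> var_dist (P i) (P j)"
    unfolding D_def using Sfin by (intro Min_le) (auto simp: S_def)
  have al: "\<alpha> > 0" unfolding \<alpha>_def using n N by auto
  define r where "r = sqrt \<alpha>"
  have r: "r > 0" "r\<^sup>2 = \<alpha>" unfolding r_def using al by auto
  define a where "a = D / (2 * (2 + r))"
  define c where "c = D * r / (2 * (2 + r))"
  define E where "E = real N * D\<^sup>2 / (2 * (2 + r)\<^sup>2)"
  have a0: "a \<ge> 0" "c \<ge> 0" unfolding a_def c_def using D0 r by auto
  have acD: "4*a + 2*c = D"
  proof -
    have d: "2 + r \<noteq> 0" using r by simp
    have "4*a + 2*c = (4*D + 2*(D*r)) / (2*(2+r))" unfolding a_def c_def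
      by (simp add: add_divide_distrib)
    also have "4*D + 2*(D*r) = D * (2*(2+r))" by (simp add: algebra_simps)
    also have "D * (2*(2+r)) / (2*(2+r)) = D" using d by simp
    finally show ?thesis .
  qed
  have nal: "real n * \<alpha> = real N" unfolding \<alpha>_def using n by simp
  have q: "(2+r)^2 > 0" using r by simp
  have Ea: "2 * real N * a\<^sup>2 = E"
  proof -
    have "2 * real N * a\<^sup>2 = 2 * real N * D\<^sup>2 / (4 * (2+r)^2)"
      unfolding a_def by (simp only: power_divide power_mult_distrib) simp
    also have "\<dots> = E" unfolding E_def using q by (simp add: field_simps)
    finally show ?thesis .
  qed
  have Ec: "2 * real n * c\<^sup>2 = E"
  proof -
    have "2 * real n * c\<^sup>2 = 2 * (real n * r^2) * D\<^sup>2 / (4 * (2+r)^2)"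
      unfolding c_def by (simp only: power_divide power_mult_distrib) simp
    also have "real n * r^2 = real N" using r(2) nal by simp
    also have "2 * real N * D\<^sup>2 / (4 * (2+r)^2) = E" unfolding E_def using q by (simp add: field_simps)
    finally show ?thesis .
  qed
  define B where "B = (real M + 1) * (2 ^ CARD('a) * exp (- E))"
  have each: "measure_pmf.prob (joint_law M N n P i) {(t, x). dec t x \<noteq> i} \<le> B" if i: "i < M" for i
  proof -
    have "measure_pmf.prob (joint_law M N n P i) {(t, x). dec t x \<noteq> i}
     \<le> real M * (2 ^ CARD('a) * exp (- 2 * real N * a\<^sup>2)) + 2 ^ CARD('a) * exp (- 2 * real n * c\<^sup>2)"
      by (rule err_i[OF M N n i dgl Dle a0 acD])
    also have "\<dots> = B" unfolding B_def
      using Ea Ec by (simp add: algebra_simps)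
    finally show ?thesis .
  qed
  have "class_error M N n P \<pi> dec \<le> (\<Sum>i<M. \<pi> i * B)"
    unfolding class_error_def using assms(4) each
    by (intro sum_mono mult_left_mono) auto
  also have "\<dots> = B" using assms(5) by (simp add: sum_distrib_right[symmetric])
  also have "B \<le> 2 * real M * exp (- real n * (\<alpha> * D\<^sup>2 / (2 * (2 + sqrt \<alpha>)\<^sup>2)
                 - max (2 * ln (real M - 1) / real n) (real CARD('a) * ln 2 / real n)))"
  proof -
    let ?mx = "max (2 * ln (real M - 1) / real n) (real CARD('a) * ln 2 / real n)"
    have e1: "real n * (\<alpha> * D\<^sup>2 / (2 * (2 + sqrt \<alpha>)\<^sup>2)) = E"
      unfolding E_def r_def[symmetric] using nal by (simp add: field_simps)
    have e2: "real n * ?mx \<ge> real CARD('a) * ln 2"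
    proof -
      have "real n * ?mx \<ge> real n * (real CARD('a) * ln 2 / real n)"
        using n by (intro mult_left_mono) auto
      then show ?thesis using n by simp
    qed
    have "- E + real CARD('a) * ln 2 \<le> - real n * (\<alpha> * D\<^sup>2 / (2 * (2 + sqrt \<alpha>)\<^sup>2) - ?mx)"
      using e1 e2 by (simp add: algebra_simps)
    then have "exp (- E + real CARD('a) * ln 2) \<le> exp (- real n * (\<alpha> * D\<^sup>2 / (2 * (2 + sqrt \<alpha>)\<^sup>2) - ?mx))"
      by (rule exp_mono)
    moreover have "exp (- E + real CARD('a) * ln 2) = 2 ^ CARD('a) * exp (- E)"
    proof -
      have "exp (real CARD('a) * ln 2) = (2::real) ^ CARD('a)"
        by (simp add: exp_of_nat_mult)
      then show ?thesis by (simp only: exp_add) simp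
    qed
    ultimately have x: "2 ^ CARD('a) * exp (- E) \<le> exp (- real n * (\<alpha> * D\<^sup>2 / (2 * (2 + sqrt \<alpha>)\<^sup>2) - ?mx))"
      by (simp only:)
    have "B \<le> (2 * real M) * (2 ^ CARD('a) * exp (- E))"
      unfolding B_def using M by (intro mult_right_mono) auto
    also have "\<dots> \<le> (2 * real M) * exp (- real n * (\<alpha> * D\<^sup>2 / (2 * (2 + sqrt \<alpha>)\<^sup>2) - ?mx))"
      using x by (intro mult_left_mono) auto
    finally show ?thesis .
  qed
  finally show ?thesis unfolding Let_def \<alpha>_def[symmetric] S_def[symmetric] D_def[symmetric] .
qed

end
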